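(* Let $q$ be a prime and $1\le K<N$ with $q^K>2$, and let $M=q^K$. Let $G$ ($K\times N$) and $\mathbf{v}\in\mathbb{F}_q^N$ have independent uniformly distributed entries in $\mathbb{F}_q$, and for each message index $j\in\{0,\dots,M-1\}$ let $\mathbf{x}_j=\mathbf{u}_jG+\mathbf{v}$, where $\mathbf{u}_j\in\mathbb{F}_q^K$ is the $q$-ary representation of $j$. Let $P_N(\mathbf{y}\mid\mathbf{x})$ be a channel transition probability from inputs in $\mathbb{F}_q^N$ to outputs in a finite set, and for input $\mathbf{x}$ and output $\mathbf{y}$ let $A(\mathbf{x},\mathbf{y})=\{\mathbf{x}': P_N(\mathbf{y}\mid\mathbf{x}')\ge P_N(\mathbf{y}\mid\mathbf{x})\}$. Fix an index $m$, a value $\mathbf{x}_m$ of its codeword and an output $\mathbf{y}$; for $j\ne m$ let $A_j(\mathbf{x}_m,\mathbf{y})$ be the event $\{\mathbf{x}_j\in A(\mathbf{x}_m,\mathbf{y})\}$, with probabilities over the ensemble conditioned on the codeword of index $m$ being $\mathbf{x}_m$, and let $\alpha=\Pr(A_{m'}(\mathbf{x}_m,\mathbf{y}))$ for any $m'\neq m$ (this does not depend on $m'$). Then for every constant $\rho\ge1$, $$\frac{(M-1)\alpha}{q}-[(M-1)\alpha]^\rho\le\Pr\Big(\bigcup_{m'\ne m}A_{m'}(\mathbf{x}_m,\mathbf{y})\Big)\le (M-1)\alpha.$$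
   Context: All vector operations are componentwise mod $q$. *)

theory Defs
  imports "HOL-Analysis.Analysis" "HOL-Computational_Algebra.Primes"
begin

text \<open>Elements of F_q are represented by {0..<q} with arithmetic mod q (q prime).
  Vectors in F_q^N are extensional functions on {0..<N}.\<close>

definition FqN :: "nat \<Rightarrow> nat \<Rightarrow> (nat \<Rightarrow> nat) set" where
  "FqN q N = PiE {0..<N} (\<lambda>_. {0..<q})"

text \<open>Random generator matrix G (K x N, G k i) and dither vector v, uniform.\<close>
definition ensemble :: "nat \<Rightarrow> nat \<Rightarrow> nat \<Rightarrow> ((nat \<Rightarrow> nat \<Rightarrow> nat) \<times> (nat \<Rightarrow> nat)) set" where
  "ensemble q K N = PiE {0..<K} (\<lambda>_. FqN q N) \<times> FqN q N"

definition qary :: "nat \<Rightarrow> nat \<Rightarrow> nat \<Rightarrow> nat" where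
  "qary q j k = (j div q ^ k) mod q"

definition codeword :: "nat \<Rightarrow> nat \<Rightarrow> nat \<Rightarrow> nat \<Rightarrow>
    (nat \<Rightarrow> nat \<Rightarrow> nat) \<times> (nat \<Rightarrow> nat) \<Rightarrow> (nat \<Rightarrow> nat)" where
  "codeword q K N j \<omega> = (\<lambda>i\<in>{0..<N}.
      ((\<Sum>k<K. qary q j k * fst \<omega> k i) + snd \<omega> i) mod q)"

definition Aset :: "nat \<Rightarrow> nat \<Rightarrow> ((nat \<Rightarrow> nat) \<Rightarrow> 'b \<Rightarrow> real) \<Rightarrow> (nat \<Rightarrow> nat) \<Rightarrow> 'b
    \<Rightarrow> (nat \<Rightarrow> nat) set" where
  "Aset q N P x y = {x' \<in> FqN q N. P x' y \<ge> P x y}"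

definition cond_set :: "nat \<Rightarrow> nat \<Rightarrow> nat \<Rightarrow> nat \<Rightarrow> (nat \<Rightarrow> nat)
    \<Rightarrow> ((nat \<Rightarrow> nat \<Rightarrow> nat) \<times> (nat \<Rightarrow> nat)) set" where
  "cond_set q K N m xm = {\<omega> \<in> ensemble q K N. codeword q K N m \<omega> = xm}"

definition cond_prob :: "nat \<Rightarrow> nat \<Rightarrow> nat \<Rightarrow> nat \<Rightarrow> (nat \<Rightarrow> nat)
    \<Rightarrow> ((nat \<Rightarrow> nat \<Rightarrow> nat) \<times> (nat \<Rightarrow> nat) \<Rightarrow> bool) \<Rightarrow> real" where
  "cond_prob q K N m xm B =
     real (card {\<omega> \<in> cond_set q K N m xm. B \<omega>}) / real (card (cond_set q K N m xm))"

end

theory Submission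
  imports Defs "HOL-Number_Theory.Cong"
begin

lemma inv_mod_prime:
  fixes a :: int assumes "prime q" "\<not> int q dvd a"
  shows "\<exists>e. [e * a = 1] (mod int q)"
proof -
  have "coprime a (int q)"
    using prime_imp_coprime[of "int q" a] assms by (simp add: coprime_commute)
  then obtain x where "[a * x = 1] (mod int q)" using cong_solve_coprime_int by blast
  then show ?thesis by (auto simp: mult.commute)
qed

lemma qary_inj:
  assumes "1 < q" "j < q ^ K" "j' < q ^ K" "\<forall>k<K. qary q j k = qary q j' k"
  shows "j = j'"
  using assms(2-4)
proof (induction K arbitrary: j j')
  case 0 then show ?case by simp
next
  case (Suc K)
  have m: "j mod q = j' mod q" using Suc.prems(3)[rule_format, of 0] by (simp add: qary_def)
  have "j div q < q ^ K" using Suc.prems(1) assms(1)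
    by (simp add: less_mult_imp_div_less mult.commute)
  moreover have "j' div q < q ^ K" using Suc.prems(2) assms(1)
    by (simp add: less_mult_imp_div_less mult.commute)
  moreover have "\<forall>k<K. qary q (j div q) k = qary q (j' div q) k"
  proof (intro allI impI)
    fix k assume "k < K"
    then have "qary q j (Suc k) = qary q j' (Suc k)" using Suc.prems(3) by simp
    then show "qary q (j div q) k = qary q (j' div q) k"
      by (simp add: qary_def div_mult2_eq mult.commute)
  qed
  ultimately have "j div q = j' div q" using Suc.IH by blast
  then show ?case using m by (metis div_mult_mod_eq)
qed

lemma card_fibers_sum:
  assumes "finite \<Omega>" "finite S"
  shows "card {w\<in>\<Omega>. g w \<in> S} = (\<Sum>s\<in>S. card {w\<in>\<Omega>. g w = s})"
proof -
  have "{w\<in>\<Omega>. g w \<in> S} = (\<Union>s\<in>S. {w\<in>\<Omega>. g w = s})" by auto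
  then show ?thesis using assms by (simp add: card_UN_disjoint disjoint_iff)
qed

lemma fiber_count:
  assumes fin: "finite \<Omega>" "finite T" and gT: "\<forall>w\<in>\<Omega>. g w \<in> T" and ne: "\<Omega> \<noteq> {}"
    and shift: "\<And>s s'. s \<in> T \<Longrightarrow> s' \<in> T \<Longrightarrow>
        \<exists>\<tau>. inj_on \<tau> \<Omega> \<and> \<tau> ` \<Omega> \<subseteq> \<Omega> \<and> (\<forall>w\<in>\<Omega>. g w = s \<longrightarrow> g (\<tau> w) = s')"
    and ST: "S \<subseteq> T"
  shows "real (card {w\<in>\<Omega>. g w \<in> S}) * real (card T) = real (card S) * real (card \<Omega>)"
proof -
  define F where "F s = {w\<in>\<Omega>. g w = s}" for s
  have le: "card (F s) \<le> card (F s')" if st: "s \<in> T" "s' \<in> T" for s s'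
  proof -
    obtain \<tau> where t: "inj_on \<tau> \<Omega>" "\<tau> ` \<Omega> \<subseteq> \<Omega>" "\<forall>w\<in>\<Omega>. g w = s \<longrightarrow> g (\<tau> w) = s'"
      using shift[OF st] by blast
    have "inj_on \<tau> (F s)" using t(1) by (rule inj_on_subset) (auto simp: F_def)
    moreover have "\<tau> ` F s \<subseteq> F s'" using t(2,3) by (auto simp: F_def)
    moreover have "finite (F s')" using fin by (simp add: F_def)
    ultimately show ?thesis by (rule card_inj_on_le)
  qed
  obtain w0 where "w0 \<in> \<Omega>" using ne by blast
  define s0 where "s0 = g w0"
  have s0T: "s0 \<in> T" using gT \<open>w0 \<in> \<Omega>\<close> s0_def by blast
  define c where "c = card (F s0)"
  have cF: "card (F s) = c" if "s \<in> T" for s using le[OF that s0T] le[OF s0T that] c_def by simp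
  have "card {w\<in>\<Omega>. g w \<in> S} = (\<Sum>s\<in>S. card (F s))"
    unfolding F_def by (rule card_fibers_sum) (use fin ST finite_subset in auto)
  also have "\<dots> = card S * c" using cF ST by (simp add: subset_iff)
  finally have 1: "card {w\<in>\<Omega>. g w \<in> S} = card S * c" .
  have "\<Omega> = {w\<in>\<Omega>. g w \<in> T}" using gT by auto
  then have "card \<Omega> = (\<Sum>s\<in>T. card (F s))"
    unfolding F_def using card_fibers_sum[OF fin(1) fin(2), of g] by simp
  also have "\<dots> = card T * c" using cF by simp
  finally have 2: "card \<Omega> = card T * c" .
  show ?thesis unfolding 1 2 by simp
qed

lemma sum_two_delta:
  fixes D :: "nat \<Rightarrow> int"
  assumes "k0 < K" "k1 < K" "k0 \<noteq> k1"
  shows "(\<Sum>k<K. D k * (if k = k0 then a else if k = k1 then b else 0)) = D k0 * a + D k1 * b"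
proof -
  have "(\<Sum>k<K. D k * (if k = k0 then a else if k = k1 then b else 0))
      = (\<Sum>k<K. (if k = k0 then D k * a else 0) + (if k = k1 then D k * b else 0))"
    by (rule sum.cong) (use assms in auto)
  also have "\<dots> = D k0 * a + D k1 * b" using assms by (simp add: sum.distrib)
  finally show ?thesis .
qed

lemma solve1:
  fixes D :: "nat \<Rightarrow> int"
  assumes "prime q" "k0 < K" "\<not> int q dvd D k0"
  shows "\<exists>H::nat\<Rightarrow>nat\<Rightarrow>nat. \<forall>i. [(\<Sum>k<K. D k * int (H k i)) = w i] (mod int q)"
proof -
  obtain e where e: "[e * D k0 = 1] (mod int q)" using inv_mod_prime assms by blast
  have q0: "int q > 0" using assms prime_gt_0_nat by simp
  define H where "H k i = (if k = k0 then nat ((e * w i) mod int q) else 0)" for k i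
  have "[(\<Sum>k<K. D k * int (H k i)) = w i] (mod int q)" for i
  proof -
    have "(\<Sum>k<K. D k * int (H k i)) = (\<Sum>k<K. if k = k0 then D k * ((e * w i) mod int q) else 0)"
      by (rule sum.cong) (use q0 in \<open>auto simp: H_def\<close>)
    also have "\<dots> = D k0 * ((e * w i) mod int q)" using assms(2) by simp
    finally have "(\<Sum>k<K. D k * int (H k i)) = D k0 * ((e * w i) mod int q)" .
    moreover have "[D k0 * ((e * w i) mod int q) = D k0 * (e * w i)] (mod int q)"
      by (intro cong_mult cong_refl) (simp add: cong_def)
    moreover have "[D k0 * (e * w i) = 1 * w i] (mod int q)"
      using cong_mult[OF e cong_refl[of "w i"]] by (simp add: algebra_simps)
    ultimately show ?thesis by (metis cong_trans mult_1)
  qed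
  then show ?thesis by blast
qed

lemma solve2:
  fixes D D' :: "nat \<Rightarrow> int"
  assumes "prime q" "k0 < K" "\<not> int q dvd D k0"
    and np: "\<not> (\<exists>c. \<forall>k<K. [D' k = c * D k] (mod int q))"
  shows "\<exists>H::nat\<Rightarrow>nat\<Rightarrow>nat. \<forall>i. [(\<Sum>k<K. D k * int (H k i)) = w i] (mod int q)
           \<and> [(\<Sum>k<K. D' k * int (H k i)) = w' i] (mod int q)"
proof -
  obtain e where e: "[e * D k0 = 1] (mod int q)" using inv_mod_prime assms by blast
  have q0: "int q > 0" using assms prime_gt_0_nat by simp
  have "\<exists>k1<K. \<not> [D k0 * D' k1 = D k1 * D' k0] (mod int q)"
  proof (rule ccontr)
    assume "\<not> ?thesis"
    then have h: "\<forall>k<K. [D k0 * D' k = D k * D' k0] (mod int q)" by blast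
    have "\<forall>k<K. [D' k = (e * D' k0) * D k] (mod int q)"
    proof (intro allI impI)
      fix k assume "k < K"
      have "[e * (D k0 * D' k) = e * (D k * D' k0)] (mod int q)"
        using h \<open>k < K\<close> by (simp add: cong_scalar_left)
      moreover have "[e * (D k0 * D' k) = 1 * D' k] (mod int q)"
        using cong_mult[OF e cong_refl[of "D' k"]] by (simp add: algebra_simps)
      ultimately show "[D' k = (e * D' k0) * D k] (mod int q)"
        by (metis (no_types, lifting) cong_sym cong_trans mult.commute mult.left_commute mult_1)
    qed
    then show False using np by blast
  qed
  then obtain k1 where k1: "k1 < K" "\<not> [D k0 * D' k1 = D k1 * D' k0] (mod int q)" by blast
  define det where "det = D k0 * D' k1 - D k1 * D' k0"
  have "\<not> int q dvd det" using k1(2) unfolding det_def by (simp add: cong_iff_dvd_diff)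
  then obtain f where f: "[f * det = 1] (mod int q)" using inv_mod_prime assms(1) by blast
  have k01: "k0 \<noteq> k1" using k1(2) by (auto simp: mult.commute)
  define a where "a i = (f * (D' k1 * w i - D k1 * w' i)) mod int q" for i
  define b where "b i = (f * (D k0 * w' i - D' k0 * w i)) mod int q" for i
  define H where "H k i = (if k = k0 then nat (a i) else if k = k1 then nat (b i) else 0)" for k i
  have a0: "a i \<ge> 0" "b i \<ge> 0" for i using q0 by (simp_all add: a_def b_def)
  have Hi: "int (H k i) = (if k = k0 then a i else if k = k1 then b i else 0)" for k i
    using a0 by (simp add: H_def)
  have "[(\<Sum>k<K. D k * int (H k i)) = w i] (mod int q) \<and> [(\<Sum>k<K. D' k * int (H k i)) = w' i] (mod int q)" for i
  proof -
    have s1: "(\<Sum>k<K. D k * int (H k i)) = D k0 * a i + D k1 * b i"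
      unfolding Hi by (rule sum_two_delta) (use assms k1 k01 in auto)
    have s2: "(\<Sum>k<K. D' k * int (H k i)) = D' k0 * a i + D' k1 * b i"
      unfolding Hi by (rule sum_two_delta) (use assms k1 k01 in auto)
    have ca: "[a i = f * (D' k1 * w i - D k1 * w' i)] (mod int q)" by (simp add: a_def cong_def)
    have cb: "[b i = f * (D k0 * w' i - D' k0 * w i)] (mod int q)" by (simp add: b_def cong_def)
    have "[D k0 * a i + D k1 * b i = D k0 * (f * (D' k1 * w i - D k1 * w' i)) + D k1 * (f * (D k0 * w' i - D' k0 * w i))] (mod int q)"
      by (intro cong_add cong_mult cong_refl ca cb)
    also have "D k0 * (f * (D' k1 * w i - D k1 * w' i)) + D k1 * (f * (D k0 * w' i - D' k0 * w i)) = (f * det) * w i"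
      by (simp add: det_def algebra_simps)
    also have "[(f * det) * w i = 1 * w i] (mod int q)" by (intro cong_mult f cong_refl)
    finally have r1: "[D k0 * a i + D k1 * b i = w i] (mod int q)" by simp
    have "[D' k0 * a i + D' k1 * b i = D' k0 * (f * (D' k1 * w i - D k1 * w' i)) + D' k1 * (f * (D k0 * w' i - D' k0 * w i))] (mod int q)"
      by (intro cong_add cong_mult cong_refl ca cb)
    also have "D' k0 * (f * (D' k1 * w i - D k1 * w' i)) + D' k1 * (f * (D k0 * w' i - D' k0 * w i)) = (f * det) * w' i"
      by (simp add: det_def algebra_simps)
    also have "[(f * det) * w' i = 1 * w' i] (mod int q)" by (intro cong_mult f cong_refl)
    finally have r2: "[D' k0 * a i + D' k1 * b i = w' i] (mod int q)" by simp
    show ?thesis using r1 r2 s1 s2 by simp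
  qed
  then show ?thesis by blast
qed

definition Dd :: "nat \<Rightarrow> nat \<Rightarrow> nat \<Rightarrow> nat \<Rightarrow> int" where
  "Dd q m j k = int (qary q j k) - int (qary q m k)"

definition trm :: "nat \<Rightarrow> nat \<Rightarrow> nat \<Rightarrow> nat \<Rightarrow> (nat\<Rightarrow>nat\<Rightarrow>nat)
   \<Rightarrow> (nat\<Rightarrow>nat\<Rightarrow>nat) \<times> (nat\<Rightarrow>nat) \<Rightarrow> (nat\<Rightarrow>nat\<Rightarrow>nat) \<times> (nat\<Rightarrow>nat)" where
  "trm q K N m H w = ((\<lambda>k\<in>{0..<K}. \<lambda>i\<in>{0..<N}. (fst w k i + H k i) mod q),
      (\<lambda>i\<in>{0..<N}. (snd w i + (q - (\<Sum>k<K. qary q m k * H k i) mod q)) mod q))"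

lemma codeword_FqN: "0 < q \<Longrightarrow> codeword q K N j w \<in> FqN q N"
  by (auto simp: codeword_def FqN_def)

lemma codeword_trm:
  assumes "0 < q" "i < N"
  shows "int (codeword q K N j (trm q K N m H w) i)
     = (int (codeword q K N j w i) + (\<Sum>k<K. Dd q m j k * int (H k i))) mod int q"
proof -
  define G where "G = fst w"
  define v where "v = snd w"
  define c where "c = (\<Sum>k<K. qary q m k * H k i)"
  have le: "c mod q \<le> q" using assms by simp
  have le2: "(\<Sum>k<K. qary q m k * H k i) mod q \<le> snd w i + q" using le c_def by simp
  have L: "int (codeword q K N j (trm q K N m H w) i)
     = ((\<Sum>k<K. int (qary q j k) * ((int (G k i) + int (H k i)) mod int q))
        + (int (v i) + (int q - int c mod int q)) mod int q) mod int q"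
    using assms le le2 by (simp add: codeword_def trm_def G_def v_def c_def of_nat_mod of_nat_diff zmod_int
        of_nat_sum add_diff_eq)
  have R: "int (codeword q K N j w i) = ((\<Sum>k<K. int (qary q j k) * int (G k i)) + int (v i)) mod int q"
    using assms by (simp add: codeword_def G_def v_def zmod_int of_nat_sum)
  have c1: "[(\<Sum>k<K. int (qary q j k) * ((int (G k i) + int (H k i)) mod int q))
      = (\<Sum>k<K. int (qary q j k) * (int (G k i) + int (H k i)))] (mod int q)"
    by (intro cong_sum cong_mult cong_refl) (simp add: cong_def)
  have c2: "[(int (v i) + (int q - int c mod int q)) mod int q = int (v i) + (int q - int c)] (mod int q)"
    unfolding cong_def by (metis add_diff_eq mod_diff_right_eq mod_mod_trivial)
  have c3: "[int (v i) + (int q - int c) = int (v i) - int c] (mod int q)"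
  proof -
    have "int (v i) + (int q - int c) = (int (v i) - int c) + int q" by simp
    then show ?thesis unfolding cong_def by (metis mod_add_self2)
  qed
  have cL: "[int (codeword q K N j (trm q K N m H w) i)
      = (\<Sum>k<K. int (qary q j k) * (int (G k i) + int (H k i))) + (int (v i) - int c)] (mod int q)"
    unfolding L using cong_add[OF c1 cong_trans[OF c2 c3]] by (simp add: cong_def)
  have eq: "(\<Sum>k<K. int (qary q j k) * (int (G k i) + int (H k i))) + (int (v i) - int c)
      = ((\<Sum>k<K. int (qary q j k) * int (G k i)) + int (v i)) + (\<Sum>k<K. Dd q m j k * int (H k i))"
    by (simp add: c_def Dd_def of_nat_sum algebra_simps sum.distrib sum_subtractf)
  have cR: "[int (codeword q K N j w i) + (\<Sum>k<K. Dd q m j k * int (H k i))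
      = ((\<Sum>k<K. int (qary q j k) * int (G k i)) + int (v i)) + (\<Sum>k<K. Dd q m j k * int (H k i))] (mod int q)"
    unfolding R by (intro cong_add cong_refl) (simp add: cong_def)
  have "[int (codeword q K N j (trm q K N m H w) i)
      = int (codeword q K N j w i) + (\<Sum>k<K. Dd q m j k * int (H k i))] (mod int q)"
    using cL cR unfolding eq by (meson cong_sym cong_trans)
  moreover have "0 \<le> int (codeword q K N j (trm q K N m H w) i)"
    "int (codeword q K N j (trm q K N m H w) i) < int q"
    using assms by (auto simp: codeword_def)
  ultimately show ?thesis
    by (metis cong_def mod_pos_pos_trivial)
qed

lemma FqN_finite: "finite (FqN q N)"
  by (simp add: FqN_def finite_PiE)

lemma ensemble_finite: "finite (ensemble q K N)"
  by (simp add: ensemble_def finite_PiE FqN_finite)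

lemma cond_set_finite: "finite (cond_set q K N m xm)"
  by (rule finite_subset[OF _ ensemble_finite]) (auto simp: cond_set_def)

lemma FqN_eqI:
  assumes "x \<in> FqN q N" "y \<in> FqN q N" "\<And>i. i < N \<Longrightarrow> int (x i) = int (y i)"
  shows "x = y"
proof
  fix i show "x i = y i"
  proof (cases "i < N")
    case True then show ?thesis using assms(3) by simp
  next
    case False then show ?thesis using assms(1,2) by (auto simp: FqN_def PiE_def extensional_def)
  qed
qed

lemma cond_set_ne:
  assumes "0 < q" "xm \<in> FqN q N"
  shows "cond_set q K N m xm \<noteq> {}"
proof -
  define w0 where "w0 = ((\<lambda>k\<in>{0..<K}. \<lambda>i\<in>{0..<N}. 0::nat), xm)"
  have "w0 \<in> ensemble q K N" using assms by (auto simp: w0_def ensemble_def FqN_def)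
  moreover have "codeword q K N m w0 = xm"
  proof (rule FqN_eqI[OF codeword_FqN[OF assms(1)] assms(2)])
    fix i assume "i < N"
    moreover have "xm i < q" using assms \<open>i < N\<close> by (auto simp: FqN_def PiE_iff)
    ultimately show "int (codeword q K N m w0 i) = int (xm i)"
      using assms by (auto simp: codeword_def w0_def)
  qed
  ultimately have "w0 \<in> cond_set q K N m xm" by (simp add: cond_set_def)
  then show ?thesis by blast
qed

lemma trm_ens:
  assumes "0 < q" shows "trm q K N m H w \<in> ensemble q K N"
  using assms by (auto simp: trm_def ensemble_def FqN_def)

lemma trm_in:
  assumes "0 < q" "w \<in> cond_set q K N m xm"
  shows "trm q K N m H w \<in> cond_set q K N m xm"
proof -
  have x: "codeword q K N m w = xm" and e: "w \<in> ensemble q K N" using assms by (auto simp: cond_set_def)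
  have xf: "xm \<in> FqN q N" using x codeword_FqN[OF assms(1)] by metis
  have "codeword q K N m (trm q K N m H w) = xm"
  proof (rule FqN_eqI[OF codeword_FqN[OF assms(1)] xf])
    fix i assume i: "i < N"
    have "int (codeword q K N m (trm q K N m H w) i) = int (codeword q K N m w i) mod int q"
      using codeword_trm[OF assms(1) i] by (simp add: Dd_def)
    also have "\<dots> = int (codeword q K N m w i)"
      using assms(1) i by (simp add: codeword_def zmod_int)
    finally show "int (codeword q K N m (trm q K N m H w) i) = int (xm i)" using x by simp
  qed
  then show ?thesis using trm_ens[OF assms(1)] by (simp add: cond_set_def)
qed

lemma mod_add_inj:
  fixes a b h q :: nat
  assumes "a < q" "b < q" "(a + h) mod q = (b + h) mod q" shows "a = b"
proof -
  have "[a + h = b + h] (mod q)" using assms(3) by (simp add: cong_def)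
  then have "[a = b] (mod q)" by (simp add: cong_add_rcancel_nat)
  then show ?thesis using assms(1,2) cong_less_modulus_unique_nat by blast
qed

lemma codeword_shift:
  assumes "0 < q" "s' \<in> FqN q N" "codeword q K N j w = s"
    and "\<forall>i<N. [(\<Sum>k<K. Dd q m j k * int (H k i)) = int (s' i) - int (s i)] (mod int q)"
  shows "codeword q K N j (trm q K N m H w) = s'"
proof (rule FqN_eqI[OF codeword_FqN[OF assms(1)] assms(2)])
  fix i assume i: "i < N"
  have "int (codeword q K N j (trm q K N m H w) i)
      = (int (s i) + (\<Sum>k<K. Dd q m j k * int (H k i))) mod int q"
    by (subst codeword_trm[OF assms(1) i]) (simp only: assms(3))
  also have "\<dots> = (int (s i) + (int (s' i) - int (s i))) mod int q"
  proof -
    have "(\<Sum>k<K. Dd q m j k * int (H k i)) mod int q = (int (s' i) - int (s i)) mod int q"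
      using assms(4) i by (simp add: cong_def)
    then show ?thesis by (metis mod_add_right_eq)
  qed
  also have "\<dots> = int (s' i)"
  proof -
    have "s' i < q" using assms(2) i by (auto simp: FqN_def PiE_iff)
    then show ?thesis by simp
  qed
  finally show "int (codeword q K N j (trm q K N m H w) i) = int (s' i)" .
qed

lemma trm_inj:
  assumes "0 < q" shows "inj_on (trm q K N m H) (ensemble q K N)"
proof (rule inj_onI)
  fix w w' assume w: "w \<in> ensemble q K N" and w': "w' \<in> ensemble q K N"
    and eq: "trm q K N m H w = trm q K N m H w'"
  obtain G v where gv: "w = (G, v)" by fastforce
  obtain G' v' where gv': "w' = (G', v')" by fastforce
  have G: "G \<in> PiE {0..<K} (\<lambda>_. FqN q N)" "v \<in> FqN q N" using w gv by (auto simp: ensemble_def)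
  have G': "G' \<in> PiE {0..<K} (\<lambda>_. FqN q N)" "v' \<in> FqN q N" using w' gv' by (auto simp: ensemble_def)
  have e1: "\<And>k i. k < K \<Longrightarrow> i < N \<Longrightarrow> (G k i + H k i) mod q = (G' k i + H k i) mod q"
  proof -
    fix k i assume ki: "k < K" "i < N"
    have "fst (trm q K N m H w) k i = fst (trm q K N m H w') k i" using eq by simp
    then show "(G k i + H k i) mod q = (G' k i + H k i) mod q" using ki gv gv' by (simp add: trm_def)
  qed
  have "G = G'"
  proof
    fix k show "G k = G' k"
    proof (cases "k < K")
      case True
      have Gk: "G k \<in> FqN q N" "G' k \<in> FqN q N" using G G' True by auto
      show ?thesis
      proof (rule FqN_eqI[OF Gk])
        fix i assume "i < N"
        then have l: "G k i < q" "G' k i < q" using Gk by (auto simp: FqN_def PiE_iff)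
        show "int (G k i) = int (G' k i)" using mod_add_inj[OF l e1[OF True \<open>i < N\<close>]] by simp
      qed
    next
      case False then show ?thesis using G G' PiE_arb[of G "{0..<K}" _ k] PiE_arb[of G' "{0..<K}" _ k] by simp
    qed
  qed
  moreover have "v = v'"
  proof (rule FqN_eqI[OF G(2) G'(2)])
    fix i assume i: "i < N"
    have "snd (trm q K N m H w) i = snd (trm q K N m H w') i" using eq by simp
    then have "(v i + (q - (\<Sum>k<K. qary q m k * H k i) mod q)) mod q
             = (v' i + (q - (\<Sum>k<K. qary q m k * H k i) mod q)) mod q"
      using i gv gv' \<open>G = G'\<close> by (simp add: trm_def)
    moreover have l: "v i < q" "v' i < q" using G(2) G'(2) i by (auto simp: FqN_def PiE_iff)
    moreover have "\<And>a. a + (q - (\<Sum>k<K. qary q m k * H k i) mod q) = a + q - (\<Sum>k<K. qary q m k * H k i) mod q"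
      using l by (simp add: less_imp_le)
    ultimately show "int (v i) = int (v' i)" using mod_add_inj[OF l] by metis
  qed
  ultimately show "w = w'" using gv gv' by simp
qed

lemma Dd_nonzero:
  assumes "prime q" "j < q ^ K" "m < q ^ K" "j \<noteq> m"
  shows "\<exists>k0<K. \<not> int q dvd Dd q m j k0"
proof (rule ccontr)
  assume "\<not> ?thesis"
  then have h: "\<forall>k<K. int q dvd Dd q m j k" by blast
  have q1: "1 < q" using assms(1) prime_gt_1_nat by blast
  have "\<forall>k<K. qary q j k = qary q m k"
  proof (intro allI impI)
    fix k assume "k < K"
    then have "[int (qary q j k) = int (qary q m k)] (mod int q)"
      using h by (simp add: Dd_def cong_iff_dvd_diff)
    then have "[qary q j k = qary q m k] (mod q)" by (simp add: cong_int_iff)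
    moreover have "qary q j k < q" "qary q m k < q" using q1 by (auto simp: qary_def)
    ultimately show "qary q j k = qary q m k" using cong_less_modulus_unique_nat by blast
  qed
  then show False using qary_inj[OF q1 assms(2,3)] assms(4) by blast
qed

lemma single_count:
  assumes "prime q" "j < q ^ K" "m < q ^ K" "j \<noteq> m" "xm \<in> FqN q N" "S \<subseteq> FqN q N"
  shows "real (card {w\<in>cond_set q K N m xm. codeword q K N j w \<in> S}) * real (card (FqN q N))
       = real (card S) * real (card (cond_set q K N m xm))"
proof (rule fiber_count[OF cond_set_finite FqN_finite])
  have q0: "0 < q" using assms(1) prime_gt_0_nat by blast
  show "\<forall>w\<in>cond_set q K N m xm. codeword q K N j w \<in> FqN q N" using codeword_FqN[OF q0] by blast
  show "cond_set q K N m xm \<noteq> {}" using cond_set_ne[OF q0 assms(5)] .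
  show "S \<subseteq> FqN q N" by fact
  fix s s' assume ss: "s \<in> FqN q N" "s' \<in> FqN q N"
  obtain k0 where k0: "k0 < K" "\<not> int q dvd Dd q m j k0" using Dd_nonzero assms by blast
  obtain H where H: "\<forall>i. [(\<Sum>k<K. Dd q m j k * int (H k i)) = int (s' i) - int (s i)] (mod int q)"
    using solve1[where D="Dd q m j" and w="\<lambda>i. int (s' i) - int (s i)", OF assms(1) k0] by blast
  have "inj_on (trm q K N m H) (cond_set q K N m xm)"
    by (rule inj_on_subset[OF trm_inj[OF q0]]) (auto simp: cond_set_def)
  moreover have "trm q K N m H ` cond_set q K N m xm \<subseteq> cond_set q K N m xm"
    using trm_in[OF q0] by blast
  moreover have "\<forall>w\<in>cond_set q K N m xm. codeword q K N j w = s \<longrightarrow> codeword q K N j (trm q K N m H w) = s'"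
    using codeword_shift[OF q0 ss(2)] H by blast
  ultimately show "\<exists>\<tau>. inj_on \<tau> (cond_set q K N m xm) \<and> \<tau> ` cond_set q K N m xm \<subseteq> cond_set q K N m xm \<and>
      (\<forall>w\<in>cond_set q K N m xm. codeword q K N j w = s \<longrightarrow> codeword q K N j (\<tau> w) = s')" by blast
qed

definition propto :: "nat \<Rightarrow> nat \<Rightarrow> nat \<Rightarrow> nat \<Rightarrow> nat \<Rightarrow> bool" where
  "propto q K m i j = (\<exists>c. \<forall>k<K. [Dd q m j k = c * Dd q m i k] (mod int q))"

lemma pair_count:
  assumes "prime q" "i < q ^ K" "j < q ^ K" "m < q ^ K" "i \<noteq> m" "\<not> propto q K m i j"
    "xm \<in> FqN q N" "S \<subseteq> FqN q N"
  shows "real (card {w\<in>cond_set q K N m xm. codeword q K N i w \<in> S \<and> codeword q K N j w \<in> S})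
        * (real (card (FqN q N)) * real (card (FqN q N)))
       = (real (card S) * real (card S)) * real (card (cond_set q K N m xm))"
proof -
  have q0: "0 < q" using assms(1) prime_gt_0_nat by blast
  let ?g = "\<lambda>w. (codeword q K N i w, codeword q K N j w)"
  have "real (card {w\<in>cond_set q K N m xm. ?g w \<in> S \<times> S}) * real (card (FqN q N \<times> FqN q N))
       = real (card (S \<times> S)) * real (card (cond_set q K N m xm))"
  proof (rule fiber_count[OF cond_set_finite finite_cartesian_product[OF FqN_finite FqN_finite]])
    show "\<forall>w\<in>cond_set q K N m xm. ?g w \<in> FqN q N \<times> FqN q N" using codeword_FqN[OF q0] by blast
    show "cond_set q K N m xm \<noteq> {}" using cond_set_ne[OF q0 assms(7)] .
    show "S \<times> S \<subseteq> FqN q N \<times> FqN q N" using assms(8) by blast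
    fix s s' assume ss: "s \<in> FqN q N \<times> FqN q N" "s' \<in> FqN q N \<times> FqN q N"
    obtain k0 where k0: "k0 < K" "\<not> int q dvd Dd q m i k0" using Dd_nonzero assms by blast
    obtain H where H: "\<forall>l. [(\<Sum>k<K. Dd q m i k * int (H k l)) = int (fst s' l) - int (fst s l)] (mod int q)
        \<and> [(\<Sum>k<K. Dd q m j k * int (H k l)) = int (snd s' l) - int (snd s l)] (mod int q)"
      using solve2[where D="Dd q m i" and D'="Dd q m j" and w="\<lambda>l. int (fst s' l) - int (fst s l)" and w'="\<lambda>l. int (snd s' l) - int (snd s l)", OF assms(1) k0] assms(6) unfolding propto_def by blast
    have "inj_on (trm q K N m H) (cond_set q K N m xm)"
      by (rule inj_on_subset[OF trm_inj[OF q0]]) (auto simp: cond_set_def)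
    moreover have "trm q K N m H ` cond_set q K N m xm \<subseteq> cond_set q K N m xm"
      using trm_in[OF q0] by blast
    moreover have "\<forall>w\<in>cond_set q K N m xm. ?g w = s \<longrightarrow> ?g (trm q K N m H w) = s'"
    proof (intro ballI impI)
      fix w assume "?g w = s"
      then have "codeword q K N i w = fst s" "codeword q K N j w = snd s" by auto
      moreover have "fst s' \<in> FqN q N" "snd s' \<in> FqN q N" using ss by auto
      ultimately have "codeword q K N i (trm q K N m H w) = fst s'"
          "codeword q K N j (trm q K N m H w) = snd s'"
        using codeword_shift[OF q0] H by blast+
      then show "?g (trm q K N m H w) = s'" by simp
    qed
    ultimately show "\<exists>\<tau>. inj_on \<tau> (cond_set q K N m xm) \<and> \<tau> ` cond_set q K N m xm \<subseteq> cond_set q K N m xm \<and>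
        (\<forall>w\<in>cond_set q K N m xm. ?g w = s \<longrightarrow> ?g (\<tau> w) = s')" by blast
  qed
  then show ?thesis by (simp add: card_cartesian_product)
qed

lemma propto_card:
  assumes "prime q" "i < q ^ K" "m < q ^ K" "i \<noteq> m"
  shows "card {j. j < q ^ K \<and> j \<noteq> m \<and> propto q K m i j} \<le> q - 1"
proof -
  have q1: "1 < q" using assms(1) prime_gt_1_nat by blast
  define Jp where "Jp = {j. j < q ^ K \<and> j \<noteq> m \<and> propto q K m i j}"
  define f where "f j = (SOME c. \<forall>k<K. [Dd q m j k = c * Dd q m i k] (mod int q)) mod int q" for j
  have fP: "\<forall>k<K. [Dd q m j k = f j * Dd q m i k] (mod int q)" if "j \<in> Jp" for j
  proof -
    have "\<exists>c. \<forall>k<K. [Dd q m j k = c * Dd q m i k] (mod int q)" using that by (simp add: Jp_def propto_def)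
    then have "\<forall>k<K. [Dd q m j k = (SOME c. \<forall>k<K. [Dd q m j k = c * Dd q m i k] (mod int q)) * Dd q m i k] (mod int q)"
      by (rule someI_ex)
    moreover have "[(SOME c. \<forall>k<K. [Dd q m j k = c * Dd q m i k] (mod int q)) * Dd q m i k = f j * Dd q m i k] (mod int q)" for k
      unfolding f_def by (intro cong_mult cong_refl) (simp add: cong_def)
    ultimately show ?thesis using cong_trans by blast
  qed
  have digits: "j = j'" if "j < q ^ K" "j' < q ^ K" "\<forall>k<K. [Dd q m j k = Dd q m j' k] (mod int q)" for j j'
  proof -
    have "\<forall>k<K. qary q j k = qary q j' k"
    proof (intro allI impI)
      fix k assume "k < K"
      then have "[Dd q m j k = Dd q m j' k] (mod int q)" using that by blast
      then have "[Dd q m j k + int (qary q m k) = Dd q m j' k + int (qary q m k)] (mod int q)"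
        by (rule cong_add) simp
      then have "[int (qary q j k) = int (qary q j' k)] (mod int q)" by (simp add: Dd_def)
      then have "[qary q j k = qary q j' k] (mod q)" by (simp add: cong_int_iff)
      moreover have "qary q j k < q" "qary q j' k < q" using q1 by (auto simp: qary_def)
      ultimately show "qary q j k = qary q j' k" using cong_less_modulus_unique_nat by blast
    qed
    then show ?thesis using qary_inj[OF q1 that(1,2)] by blast
  qed
  have "inj_on f Jp"
  proof (rule inj_onI)
    fix j j' assume j: "j \<in> Jp" "j' \<in> Jp" "f j = f j'"
    have "\<forall>k<K. [Dd q m j k = Dd q m j' k] (mod int q)"
      using fP[OF j(1)] fP[OF j(2)] j(3) by (metis cong_sym cong_trans)
    then show "j = j'" using digits j by (auto simp: Jp_def)
  qed
  moreover have "f ` Jp \<subseteq> {1..<int q}"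
  proof
    fix c assume "c \<in> f ` Jp"
    then obtain j where j: "j \<in> Jp" "c = f j" by blast
    have c0: "0 \<le> c" "c < int q" using q1 j by (auto simp: f_def)
    have "c \<noteq> 0"
    proof
      assume "c = 0"
      then have "\<forall>k<K. [Dd q m j k = Dd q m m k] (mod int q)" using fP[OF j(1)] j by (simp add: Dd_def)
      then have "j = m" using digits j assms(3) by (auto simp: Jp_def)
      then show False using j by (simp add: Jp_def)
    qed
    then show "c \<in> {1..<int q}" using c0 by simp
  qed
  ultimately have "card Jp \<le> card {1..<int q}" by (intro card_inj_on_le) auto
  then show ?thesis using q1 by (simp add: Jp_def nat_diff_distrib)
qed

lemma pointwise_bound:
  fixes k :: nat and q :: real assumes "q > 0"
  shows "2 * real k / q - (real k)^2 / q^2 \<le> (if k > 0 then 1 else 0)"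
proof (cases "k > 0")
  case True
  have "0 \<le> (real k / q - 1)^2" by simp
  moreover have "(real k / q - 1)^2 = (real k)^2 / q^2 - 2 * real k / q + 1"
    using assms by (simp add: power2_eq_square field_simps)
  ultimately have "2 * real k / q - (real k)^2 / q^2 \<le> 1" by linarith
  then show ?thesis using True by simp
qed simp

theorem lemma2:
  fixes q K N m :: nat and P :: "(nat \<Rightarrow> nat) \<Rightarrow> 'b::finite \<Rightarrow> real"
    and xm :: "nat \<Rightarrow> nat" and y :: 'b and \<rho> :: real
  assumes "prime q" and "1 \<le> K" and "K < N" and "q ^ K > 2"
    and "\<And>x y. x \<in> FqN q N \<Longrightarrow> P x y \<ge> 0"
    and "\<And>x. x \<in> FqN q N \<Longrightarrow> (\<Sum>y\<in>UNIV. P x y) = 1"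
    and "m < q ^ K" and "xm \<in> FqN q N"
    and "\<rho> \<ge> 1"
    and "m' < q ^ K" and "m' \<noteq> m"
  shows "let M = q ^ K;
             \<alpha> = cond_prob q K N m xm
                   (\<lambda>\<omega>. codeword q K N m' \<omega> \<in> Aset q N P xm y);
             U = cond_prob q K N m xm
                   (\<lambda>\<omega>. \<exists>j<M. j \<noteq> m \<and> codeword q K N j \<omega> \<in> Aset q N P xm y)
         in (real M - 1) * \<alpha> / real q - ((real M - 1) * \<alpha>) powr \<rho> \<le> U
            \<and> U \<le> (real M - 1) * \<alpha>"
proof -
  have pq: "prime q" by fact
  have q0: "0 < q" and q1: "1 < q" using pq prime_gt_0_nat prime_gt_1_nat by blast+
  define M where "M = q ^ K"
  define \<Omega> where "\<Omega> = cond_set q K N m xm"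
  define A where "A = Aset q N P xm y"
  define E where "E j w = (codeword q K N j w \<in> A)" for j w
  define J where "J = {j. j < M \<and> j \<noteq> m}"
  define n where "n = real (card \<Omega>)"
  define a0 where "a0 = real (card A) / real (card (FqN q N))"
  define cE where "cE j = card {w\<in>\<Omega>. E j w}" for j
  define c2 where "c2 i j = card {w\<in>\<Omega>. E i w \<and> E j w}" for i j
  have finO: "finite \<Omega>" unfolding \<Omega>_def by (rule cond_set_finite)
  have n0: "n > 0" unfolding n_def \<Omega>_def
    using cond_set_ne[OF q0 assms(8)] cond_set_finite by (simp add: card_gt_0_iff)
  have AF: "A \<subseteq> FqN q N" by (auto simp: A_def Aset_def)
  have T0: "real (card (FqN q N)) > 0" using assms(8) FqN_finite by (auto simp: card_gt_0_iff)
  have a0ge: "a0 \<ge> 0" by (simp add: a0_def)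
  have finJ: "finite J" by (simp add: J_def)
  have mM: "m < M" using assms(7) by (simp add: M_def)
  have cardJ: "real (card J) = real M - 1"
  proof -
    have "J = {..<M} - {m}" by (auto simp: J_def)
    then have "card J = M - 1" using mM by simp
    then show ?thesis using mM by simp
  qed
  have cEJ: "real (cE j) = n * a0" if "j \<in> J" for j
  proof -
    have "real (cE j) * real (card (FqN q N)) = real (card A) * n"
      using single_count[OF pq _ assms(7) _ assms(8) AF, of j] that
      by (simp add: J_def M_def cE_def E_def \<Omega>_def n_def)
    then show ?thesis using T0 by (simp add: a0_def field_simps)
  qed
  have c2J: "real (c2 i j) = n * a0 * a0" if "i \<in> J" "j \<in> J" "\<not> propto q K m i j" for i j
  proof -
    have "real (c2 i j) * (real (card (FqN q N)) * real (card (FqN q N))) = (real (card A) * real (card A)) * n"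
      using pair_count[OF pq _ _ assms(7) _ that(3) assms(8) AF] that(1,2)
      by (simp add: J_def M_def c2_def E_def \<Omega>_def n_def)
    then show ?thesis using T0 by (simp add: a0_def field_simps)
  qed
  have c2le: "c2 i j \<le> cE i" for i j
    unfolding c2_def cE_def by (rule card_mono) (use finO in auto)
  have alpha: "cond_prob q K N m xm (\<lambda>\<omega>. codeword q K N m' \<omega> \<in> Aset q N P xm y) = a0"
  proof -
    have "m' \<in> J" using assms(10,11) by (simp add: J_def M_def)
    then show ?thesis using cEJ[of m'] n0
      by (simp add: cond_prob_def cE_def E_def A_def \<Omega>_def n_def)
  qed
  define X where "X w = card {j\<in>J. E j w}" for w
  define Ug where "Ug = {w\<in>\<Omega>. \<exists>j<M. j \<noteq> m \<and> E j w}"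
  have Ueq: "cond_prob q K N m xm (\<lambda>\<omega>. \<exists>j<q ^ K. j \<noteq> m \<and> codeword q K N j \<omega> \<in> Aset q N P xm y)
      = real (card Ug) / n"
    by (simp add: cond_prob_def Ug_def E_def A_def \<Omega>_def n_def M_def)
  define t where "t = (real M - 1) * a0"
  have up: "real (card Ug) \<le> n * t"
  proof -
    have "Ug = (\<Union>j\<in>J. {w\<in>\<Omega>. E j w})" by (auto simp: Ug_def J_def)
    then have "card Ug \<le> (\<Sum>j\<in>J. cE j)" unfolding cE_def using card_UN_le[OF finJ] by simp
    then have "real (card Ug) \<le> (\<Sum>j\<in>J. real (cE j))" by (metis of_nat_le_iff of_nat_sum)
    also have "\<dots> = (\<Sum>j\<in>J. n * a0)" using cEJ by simp
    also have "\<dots> = n * t" using cardJ by (simp add: t_def)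
    finally show ?thesis .
  qed
  define ind where "ind j w = (if E j w then 1 else 0 :: real)" for j w
  have Xs: "real (X w) = (\<Sum>j\<in>J. ind j w)" for w
    unfolding X_def ind_def using finJ by (simp add: sum.If_cases Int_def)
  have UgX: "Ug = {w\<in>\<Omega>. X w > 0}"
    using finJ by (auto simp: Ug_def X_def J_def card_gt_0_iff)
  have sumX: "(\<Sum>w\<in>\<Omega>. real (X w)) = n * t"
  proof -
    have "(\<Sum>w\<in>\<Omega>. real (X w)) = (\<Sum>j\<in>J. \<Sum>w\<in>\<Omega>. ind j w)"
      unfolding Xs by (rule sum.swap)
    also have "\<dots> = (\<Sum>j\<in>J. real (cE j))"
      unfolding ind_def cE_def using finO by (simp add: sum.If_cases Int_def)
    also have "\<dots> = (\<Sum>j\<in>J. n * a0)" using cEJ by simp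
    also have "\<dots> = n * t" using cardJ by (simp add: t_def)
    finally show ?thesis .
  qed
  have rowb: "(\<Sum>j\<in>J. real (c2 i j)) \<le> (real q - 1) * (n * a0) + (real M - 1) * (n * a0 * a0)" if iJ: "i \<in> J" for i
  proof -
    define Jp where "Jp = {j\<in>J. propto q K m i j}"
    have "(\<Sum>j\<in>J. real (c2 i j)) \<le> (\<Sum>j\<in>J. if propto q K m i j then n * a0 else n * a0 * a0)"
    proof (rule sum_mono)
      fix j assume jJ: "j \<in> J"
      show "real (c2 i j) \<le> (if propto q K m i j then n * a0 else n * a0 * a0)"
      proof (cases "propto q K m i j")
        case True then show ?thesis using c2le[of i j] cEJ[OF iJ] by simp
      next
        case False then show ?thesis using c2J[OF iJ jJ] by simp
      qed
    qed
    also have "\<dots> = real (card Jp) * (n * a0) + real (card {j\<in>J. \<not> propto q K m i j}) * (n * a0 * a0)"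
      using finJ by (simp add: sum.If_cases Jp_def Int_def)
    also have "\<dots> \<le> (real q - 1) * (n * a0) + (real M - 1) * (n * a0 * a0)"
    proof (intro add_mono mult_right_mono)
      have "card Jp \<le> q - 1" using propto_card[OF pq _ assms(7), of i] iJ
        by (simp add: Jp_def J_def M_def conj_assoc)
      then show "real (card Jp) \<le> real q - 1" using q1 by (simp add: of_nat_diff)
      have "card {j\<in>J. \<not> propto q K m i j} \<le> card J" by (rule card_mono[OF finJ]) auto
      then show "real (card {j\<in>J. \<not> propto q K m i j}) \<le> real M - 1" using cardJ by linarith
    qed (use n0 a0ge in auto)
    finally show ?thesis .
  qed
  have sumX2: "(\<Sum>w\<in>\<Omega>. (real (X w))^2) \<le> n * t * (real q - 1 + t)"
  proof -
    have "(\<Sum>w\<in>\<Omega>. (real (X w))^2) = (\<Sum>w\<in>\<Omega>. \<Sum>i\<in>J. \<Sum>j\<in>J. ind i w * ind j w)"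
      unfolding Xs power2_eq_square by (simp add: sum_product)
    also have "\<dots> = (\<Sum>i\<in>J. \<Sum>w\<in>\<Omega>. \<Sum>j\<in>J. ind i w * ind j w)" by (rule sum.swap)
    also have "\<dots> = (\<Sum>i\<in>J. \<Sum>j\<in>J. \<Sum>w\<in>\<Omega>. ind i w * ind j w)" by (simp add: sum.swap[of _ \<Omega>])
    also have "\<dots> = (\<Sum>i\<in>J. \<Sum>j\<in>J. real (c2 i j))"
    proof (intro sum.cong refl)
      fix i j
      have "(\<Sum>w\<in>\<Omega>. ind i w * ind j w) = (\<Sum>w\<in>\<Omega>. if E i w \<and> E j w then 1 else 0)"
        by (rule sum.cong) (auto simp: ind_def)
      then show "(\<Sum>w\<in>\<Omega>. ind i w * ind j w) = real (c2 i j)"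
        unfolding c2_def using finO by (simp add: sum.If_cases Int_def)
    qed
    also have "\<dots> \<le> (\<Sum>i\<in>J. (real q - 1) * (n * a0) + (real M - 1) * (n * a0 * a0))"
      by (rule sum_mono) (rule rowb)
    also have "\<dots> = real (card J) * ((real q - 1) * (n * a0) + (real M - 1) * (n * a0 * a0))" by simp
    also have "\<dots> = n * t * (real q - 1 + t)" unfolding cardJ t_def by (simp add: algebra_simps)
    finally show ?thesis .
  qed
  have low: "real (card Ug) \<ge> n * (2 * t / real q - t * (real q - 1 + t) / (real q)^2)"
  proof -
    have "real (card Ug) = (\<Sum>w\<in>\<Omega>. if X w > 0 then 1 else 0)"
      unfolding UgX using finO by (simp add: sum.If_cases Int_def)
    also have "\<dots> \<ge> (\<Sum>w\<in>\<Omega>. 2 * real (X w) / real q - (real (X w))^2 / (real q)^2)"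
      by (rule sum_mono) (rule pointwise_bound, use q0 in simp)
    finally have "real (card Ug) \<ge> 2 / real q * (\<Sum>w\<in>\<Omega>. real (X w)) - (\<Sum>w\<in>\<Omega>. (real (X w))^2) / (real q)^2"
      by (simp add: sum_subtractf sum_divide_distrib sum_distrib_left)
    moreover have "(\<Sum>w\<in>\<Omega>. (real (X w))^2) / (real q)^2 \<le> n * t * (real q - 1 + t) / (real q)^2"
      using sumX2 q0 by (simp add: divide_right_mono)
    ultimately show ?thesis unfolding sumX by (simp add: algebra_simps)
  qed
  have t0: "t \<ge> 0" using a0ge mM by (simp add: t_def)
  have Ul: "t / real q - t powr \<rho> \<le> real (card Ug) / n"
  proof (cases "t \<le> 1")
    case True
    have "t / real q \<le> 2 * t / real q - t * (real q - 1 + t) / (real q)^2"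
    proof -
      have "t * (real q - 1 + t) \<le> t * real q" using True t0 by (simp add: mult_left_mono)
      then have "t * (real q - 1 + t) / (real q)^2 \<le> t * real q / (real q)^2"
        by (simp add: divide_right_mono)
      also have "t * real q / (real q)^2 = t / real q" using q0 by (simp add: power2_eq_square)
      finally show ?thesis by simp
    qed
    also have "\<dots> \<le> real (card Ug) / n" using low n0 by (simp add: field_simps)
    finally have "t / real q \<le> real (card Ug) / n" .
    moreover have "0 \<le> t powr \<rho>" by simp
    ultimately show ?thesis by linarith
  next
    case False
    have "t powr 1 \<le> t powr \<rho>" using False assms(9) by (intro powr_mono) auto
    then have "t \<le> t powr \<rho>" using False by simp
    moreover have "t / real q \<le> t" using q1 t0 by (simp add: divide_le_eq mult_le_cancel_left1 t_def)
    moreover have "0 \<le> real (card Ug) / n" using n0 by simp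
    ultimately show ?thesis by linarith
  qed
  have Uu: "real (card Ug) / n \<le> t" using up n0 by (simp add: field_simps)
  show ?thesis unfolding Let_def alpha Ueq using Ul Uu by (simp add: t_def M_def)
qed

end
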